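(* For every $n\ge2$, every $K_n$-treelike graph is $\mathcal{C}$-$\mathrm{HH}$.
   Context: Graphs are simple; subgraphs are induced. A homomorphism maps edges to edges. A graph $G$ is $\mathcal{C}$-$\mathrm{HH}$ if every homomorphism from a finite connected induced subgraph of $G$ into $G$ extends to a homomorphism $G\to G$. For $n\ge2$, a $K_n$-treelike graph is a finite connected graph whose vertex set is covered by a family of $n$-element vertex sets (components), each inducing $K_n$, such that every edge lies inside some component, two distinct components share at most one vertex, and every induced cycle has all its vertices inside a single component. *)

theory Defs
  imports Main
begin

definition simple_graph :: "'a set \<Rightarrow> ('a \<Rightarrow> 'a \<Rightarrow> bool) \<Rightarrow> bool" where
  "simple_graph V E \<longleftrightarrow>
     (\<forall>x y. E x y \<longrightarrow> E y x) \<and> (\<forall>x. \<not> E x x) \<and> (\<forall>x y. E x y \<longrightarrow> x \<in> V \<and> y \<in> V)"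

definition connected_set :: "('a \<Rightarrow> 'a \<Rightarrow> bool) \<Rightarrow> 'a set \<Rightarrow> bool" where
  "connected_set E A \<longleftrightarrow> A \<noteq> {} \<and>
     (\<forall>x\<in>A. \<forall>y\<in>A. (\<lambda>u v. u \<in> A \<and> v \<in> A \<and> E u v)\<^sup>*\<^sup>* x y)"

definition graph_hom :: "('a \<Rightarrow> 'a \<Rightarrow> bool) \<Rightarrow> 'a set \<Rightarrow> 'a set \<Rightarrow> ('a \<Rightarrow> 'a) \<Rightarrow> bool" where
  "graph_hom E A V f \<longleftrightarrow> (\<forall>x\<in>A. f x \<in> V) \<and> (\<forall>x\<in>A. \<forall>y\<in>A. E x y \<longrightarrow> E (f x) (f y))"

definition C_HH :: "'a set \<Rightarrow> ('a \<Rightarrow> 'a \<Rightarrow> bool) \<Rightarrow> bool" where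
  "C_HH V E \<longleftrightarrow>
     (\<forall>A f. A \<subseteq> V \<and> finite A \<and> connected_set E A \<and> graph_hom E A V f \<longrightarrow>
        (\<exists>g. graph_hom E V V g \<and> (\<forall>x\<in>A. g x = f x)))"

definition induced_cycle :: "('a \<Rightarrow> 'a \<Rightarrow> bool) \<Rightarrow> 'a set \<Rightarrow> bool" where
  "induced_cycle E C \<longleftrightarrow> finite C \<and> card C \<ge> 3 \<and>
     (\<exists>v. bij_betw v {0..<card C} C \<and>
        (\<forall>i<card C. \<forall>j<card C.
            E (v i) (v j) \<longleftrightarrow> (j = Suc i mod card C \<or> i = Suc j mod card C)))"

definition clique :: "('a \<Rightarrow> 'a \<Rightarrow> bool) \<Rightarrow> 'a set \<Rightarrow> bool" where
  "clique E K \<longleftrightarrow> (\<forall>x\<in>K. \<forall>y\<in>K. x \<noteq> y \<longrightarrow> E x y)"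

definition Kn_treelike :: "nat \<Rightarrow> 'a set \<Rightarrow> ('a \<Rightarrow> 'a \<Rightarrow> bool) \<Rightarrow> bool" where
  "Kn_treelike n V E \<longleftrightarrow> simple_graph V E \<and> finite V \<and> connected_set E V \<and>
     (\<exists>\<K>. \<Union>\<K> = V \<and>
          (\<forall>K\<in>\<K>. K \<subseteq> V \<and> card K = n \<and> clique E K) \<and>
          (\<forall>x y. E x y \<longrightarrow> (\<exists>K\<in>\<K>. x \<in> K \<and> y \<in> K)) \<and>
          (\<forall>K\<in>\<K>. \<forall>K'\<in>\<K>. K \<noteq> K' \<longrightarrow> card (K \<inter> K') \<le> 1) \<and>
          (\<forall>C. C \<subseteq> V \<and> induced_cycle E C \<longrightarrow> (\<exists>K\<in>\<K>. C \<subseteq> K)))"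

end

theory Submission
  imports Defs
begin

definition walk :: "('a \<Rightarrow> 'a \<Rightarrow> bool) \<Rightarrow> 'a set \<Rightarrow> 'a list \<Rightarrow> bool" where
  "walk E A p \<longleftrightarrow> p \<noteq> [] \<and> set p \<subseteq> A \<and> (\<forall>i. Suc i < length p \<longrightarrow> E (p!i) (p!Suc i))"

lemma rtranclp_walk:
  assumes "(\<lambda>u v. u \<in> A \<and> v \<in> A \<and> E u v)\<^sup>*\<^sup>* x y" "y \<in> A"
  shows "\<exists>p. walk E A p \<and> hd p = x \<and> last p = y"
  using assms
proof (induction rule: converse_rtranclp_induct)
  case base
  then show ?case by (intro exI[of _ "[y]"]) (auto simp: walk_def)
next
  case (step x z)
  then obtain p where p: "walk E A p" "hd p = z" "last p = y" by auto
  have "walk E A (x # p)"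
    unfolding walk_def
  proof (intro conjI allI impI)
    fix i assume i: "Suc i < length (x # p)"
    show "E ((x # p) ! i) ((x # p) ! Suc i)"
    proof (cases i)
      case 0 with p step.hyps show ?thesis by (auto simp: walk_def hd_conv_nth)
    next
      case (Suc k) with p i show ?thesis by (auto simp: walk_def)
    qed
  qed (use p step.hyps in \<open>auto simp: walk_def\<close>)
  then show ?case using p by (intro exI[of _ "x # p"]) (auto simp: walk_def)
qed

lemma walk_take:
  assumes "walk E A p" "0 < k" "k \<le> length p"
  shows "walk E A (take k p)" "hd (take k p) = hd p" "last (take k p) = p ! (k - 1)"
  using assms by (auto simp: walk_def hd_conv_nth last_conv_nth dest: in_set_takeD)

lemma walk_drop:
  assumes "walk E A p" "k < length p"
  shows "walk E A (drop k p)" "hd (drop k p) = p ! k" "last (drop k p) = last p"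
  using assms by (auto simp: walk_def hd_drop_conv_nth dest: in_set_dropD)

lemma walk_short1:
  assumes "walk E A p" "i < j" "j < length p" "E (p!i) (p!j)"
  shows "walk E A (take (Suc i) p @ drop j p)" "hd (take (Suc i) p @ drop j p) = hd p"
    "last (take (Suc i) p @ drop j p) = last p" "length (take (Suc i) p @ drop j p) = length p - (j - Suc i)"
proof -
  show "walk E A (take (Suc i) p @ drop j p)"
    unfolding walk_def
  proof (intro conjI allI impI)
    fix k assume k: "Suc k < length (take (Suc i) p @ drop j p)"
    show "E ((take (Suc i) p @ drop j p) ! k) ((take (Suc i) p @ drop j p) ! Suc k)"
    proof (cases "Suc k < Suc i")
      case True then show ?thesis using assms k by (auto simp: walk_def nth_append)
    next
      case False
      show ?thesis
      proof (cases "k = i")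
        case True then show ?thesis using assms k by (auto simp: walk_def nth_append min_def)
      next
        case False
        then have "k > i" using \<open>\<not> Suc k < Suc i\<close> by auto
        define m where "m = k - Suc i"
        have lt: "Suc i \<le> length p" using assms by auto
        have km: "k = Suc i + m" using \<open>k > i\<close> m_def by auto
        have len: "length (take (Suc i) p @ drop j p) = Suc i + (length p - j)" using assms lt by auto
        have e1: "(take (Suc i) p @ drop j p) ! k = p ! (j + m)"
          using lt km assms by (simp add: nth_append)
        have e2: "(take (Suc i) p @ drop j p) ! Suc k = p ! Suc (j + m)"
          using lt km assms k len by (simp add: nth_append)
        have "Suc (j + m) < length p" using k len km by auto
        then show ?thesis using assms(1) e1 e2 by (simp add: walk_def)
      qed
    qed
  qed (use assms in \<open>auto simp: walk_def dest: in_set_takeD in_set_dropD\<close>)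
  show "hd (take (Suc i) p @ drop j p) = hd p" using assms by (cases p) auto
  show "last (take (Suc i) p @ drop j p) = last p" using assms by auto
  show "length (take (Suc i) p @ drop j p) = length p - (j - Suc i)" using assms by auto
qed

lemma walk_short2:
  assumes "walk E A p" "i < j" "j < length p" "p!i = p!j"
  shows "walk E A (take (Suc i) p @ drop (Suc j) p)" "hd (take (Suc i) p @ drop (Suc j) p) = hd p"
    "last (take (Suc i) p @ drop (Suc j) p) = last p" "length (take (Suc i) p @ drop (Suc j) p) < length p"
proof -
  have lt: "Suc i \<le> length p" using assms by auto
  show "walk E A (take (Suc i) p @ drop (Suc j) p)"
    unfolding walk_def
  proof (intro conjI allI impI)
    fix k assume k: "Suc k < length (take (Suc i) p @ drop (Suc j) p)"
    have len: "length (take (Suc i) p @ drop (Suc j) p) = Suc i + (length p - Suc j)" using assms lt by auto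
    show "E ((take (Suc i) p @ drop (Suc j) p) ! k) ((take (Suc i) p @ drop (Suc j) p) ! Suc k)"
    proof (cases "Suc k < Suc i")
      case True then show ?thesis using assms k by (auto simp: walk_def nth_append)
    next
      case False
      show ?thesis
      proof (cases "k = i")
        case True
        have e1: "(take (Suc i) p @ drop (Suc j) p) ! k = p ! j"
          using lt True assms by (simp add: nth_append)
        have e2: "(take (Suc i) p @ drop (Suc j) p) ! Suc k = p ! Suc j"
          using lt True assms k len by (simp add: nth_append)
        have "Suc j < length p" using k len True by auto
        then show ?thesis using assms(1) e1 e2 by (simp add: walk_def)
      next
        case False
        then have "k > i" using \<open>\<not> Suc k < Suc i\<close> by auto
        define m where "m = k - Suc i"
        have km: "k = Suc i + m" using \<open>k > i\<close> m_def by auto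
        have e1: "(take (Suc i) p @ drop (Suc j) p) ! k = p ! (Suc j + m)"
          using lt km assms by (simp add: nth_append)
        have e2: "(take (Suc i) p @ drop (Suc j) p) ! Suc k = p ! Suc (Suc j + m)"
          using lt km assms k len by (simp add: nth_append)
        have "Suc (Suc j + m) < length p" using k len km by auto
        then show ?thesis using assms(1) e1 e2 by (simp add: walk_def)
      qed
    qed
  qed (use assms in \<open>auto simp: walk_def dest: in_set_takeD in_set_dropD\<close>)
  show "hd (take (Suc i) p @ drop (Suc j) p) = hd p" using assms by (cases p) auto
  show "last (take (Suc i) p @ drop (Suc j) p) = last p"
  proof (cases "Suc j = length p")
    case True
    have "p \<noteq> []" using assms(3) by auto
    then have "last p = p ! (length p - 1)" by (rule last_conv_nth)
    also have "length p - 1 = j" using True by simp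
    finally have "last p = p ! j" .
    moreover have "last (take (Suc i) p) = p ! i" using walk_take(3)[OF assms(1), of "Suc i"] lt by simp
    ultimately show ?thesis using True assms by simp
  next
    case False then show ?thesis using assms by auto
  qed
  show "length (take (Suc i) p @ drop (Suc j) p) < length p" using assms by auto
qed

locale TL =
  fixes n :: nat and V :: "'a set" and E :: "'a \<Rightarrow> 'a \<Rightarrow> bool" and KK :: "'a set set"
  assumes n2: "n \<ge> 2" and sym: "\<And>x y. E x y \<Longrightarrow> E y x" and irr: "\<And>x. \<not> E x x"
    and EV: "\<And>x y. E x y \<Longrightarrow> x \<in> V \<and> y \<in> V"
    and finV: "finite V" and conn: "connected_set E V" and unK: "\<Union>KK = V"
    and Ks: "\<And>K. K \<in> KK \<Longrightarrow> K \<subseteq> V \<and> card K = n \<and> clique E K"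
    and Ke: "\<And>x y. E x y \<Longrightarrow> \<exists>K\<in>KK. x \<in> K \<and> y \<in> K"
    and Ki: "\<And>K K'. K \<in> KK \<Longrightarrow> K' \<in> KK \<Longrightarrow> K \<noteq> K' \<Longrightarrow> card (K \<inter> K') \<le> 1"
    and Kc: "\<And>C. C \<subseteq> V \<Longrightarrow> induced_cycle E C \<Longrightarrow> \<exists>K\<in>KK. C \<subseteq> K"
begin

lemma finK: "K \<in> KK \<Longrightarrow> finite K"
  using Ks n2 by (metis card.infinite not_numeral_le_zero)

lemma same_K:
  assumes "K \<in> KK" "K' \<in> KK" "x \<in> K" "y \<in> K" "x \<in> K'" "y \<in> K'" "x \<noteq> y"
  shows "K = K'"
proof (rule ccontr)
  assume "K \<noteq> K'"
  then have "card (K \<inter> K') \<le> 1" using Ki assms by auto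
  moreover have "card {x, y} \<le> card (K \<inter> K')"
    using assms finK by (intro card_mono) auto
  ultimately show False using assms by auto
qed

lemma clique_edge: "K \<in> KK \<Longrightarrow> x \<in> K \<Longrightarrow> y \<in> K \<Longrightarrow> x \<noteq> y \<Longrightarrow> E x y"
  using Ks unfolding clique_def by blast

lemma cycle:
  assumes "distinct c" "length c \<ge> 3" "set c \<subseteq> V"
    "\<forall>i<length c. \<forall>j<length c. E (c!i) (c!j) \<longleftrightarrow> (j = Suc i mod length c \<or> i = Suc j mod length c)"
  shows "\<exists>K\<in>KK. set c \<subseteq> K"
proof -
  have cs: "card (set c) = length c" using assms(1) by (rule distinct_card)
  have "induced_cycle E (set c)"
    unfolding induced_cycle_def cs
    using assms by (intro conjI exI[of _ "(!) c"] bij_betw_nth) auto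
  then show ?thesis using Kc assms(3) by blast
qed

lemma tri:
  assumes "E x y" "E y z" "E x z"
  shows "\<exists>K\<in>KK. x \<in> K \<and> y \<in> K \<and> z \<in> K"
proof -
  have d: "x \<noteq> y" "y \<noteq> z" "x \<noteq> z" using assms irr by auto
  have "\<exists>K\<in>KK. set [x,y,z] \<subseteq> K"
  proof (rule cycle)
    show "set [x,y,z] \<subseteq> V" using assms EV by auto
    show "\<forall>i<length [x,y,z]. \<forall>j<length [x,y,z]. E ([x,y,z]!i) ([x,y,z]!j) \<longleftrightarrow>
       (j = Suc i mod length [x,y,z] \<or> i = Suc j mod length [x,y,z])"
    proof (intro allI impI)
      fix i j assume "i < length [x,y,z]" "j < length [x,y,z]"
      then have "i = 0 \<or> i = 1 \<or> i = 2" "j = 0 \<or> j = 1 \<or> j = 2" by auto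
      moreover have "E y x" "E z y" "E z x" using assms sym by auto
      ultimately show "E ([x,y,z]!i) ([x,y,z]!j) \<longleftrightarrow>
       (j = Suc i mod length [x,y,z] \<or> i = Suc j mod length [x,y,z])"
        using assms irr by (elim disjE) simp_all
    qed
  qed (use d in auto)
  then show ?thesis by auto
qed

lemma clique_in_K:
  assumes "clique E C" "C \<noteq> {}" "C \<subseteq> V"
  shows "\<exists>K\<in>KK. C \<subseteq> K"
proof -
  obtain x where x: "x \<in> C" using assms by auto
  show ?thesis
  proof (cases "C = {x}")
    case True
    then show ?thesis using x unK assms by auto
  next
    case False
    then obtain y where y: "y \<in> C" "y \<noteq> x" using x by auto
    have exy: "E x y" using assms x y unfolding clique_def by auto
    then obtain K0 where K0: "K0 \<in> KK" "x \<in> K0" "y \<in> K0" using Ke by blast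
    have "z \<in> K0" if z: "z \<in> C" for z
    proof (cases "z = x \<or> z = y")
      case True then show ?thesis using K0 by auto
    next
      case False
      then have "E y z" "E x z" using assms z x y unfolding clique_def by auto
      then obtain Kz where "Kz \<in> KK" "x \<in> Kz" "y \<in> Kz" "z \<in> Kz" using tri exy by blast
      then have "Kz = K0" using same_K K0 y by blast
      then show ?thesis using \<open>z \<in> Kz\<close> by simp
    qed
    then show ?thesis using K0 by blast
  qed
qed

lemma key:
  assumes "v \<notin> A" "A \<subseteq> V" "walk E A p" "E v (hd p)" "E v (last p)" "hd p \<noteq> last p"
  shows "E (hd p) (last p)"
  using assms
proof (induction "length p" arbitrary: p rule: less_induct)
  case less
  define a where "a = hd p"
  define b where "b = last p"
  obtain q where q: "walk E A q \<and> hd q = a \<and> last q = b"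
    and qmin: "\<forall>q'. walk E A q' \<and> hd q' = a \<and> last q' = b \<longrightarrow> length q \<le> length q'"
    using ex_has_least_nat[of "\<lambda>q. walk E A q \<and> hd q = a \<and> last q = b" p length] less.prems a_def b_def
    by blast
  define L where "L = length q"
  have Lp: "L \<le> length p" using qmin less.prems a_def b_def L_def by blast
  have qne: "q \<noteq> []" and qA: "set q \<subseteq> A" and edge: "\<And>i. Suc i < L \<Longrightarrow> E (q!i) (q!Suc i)"
    using q L_def unfolding walk_def by auto
  have qiA: "\<And>i. i < L \<Longrightarrow> q!i \<in> A" using qA L_def by auto
  have ha: "q!0 = a" using q qne by (simp add: hd_conv_nth)
  have hb: "q!(L-1) = b" using q qne L_def by (simp add: last_conv_nth)
  have M1: "j = Suc i" if "i < j" "j < L" "E (q!i) (q!j)" for i j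
  proof (rule ccontr)
    assume "j \<noteq> Suc i"
    then have "length (take (Suc i) q @ drop j q) < L" using walk_short1(4)[of E A q i j] q that L_def by auto
    then show False using walk_short1[of E A q i j] q that L_def qmin by force
  qed
  have M2: "q!i \<noteq> q!j" if "i < j" "j < L" for i j
  proof
    assume "q!i = q!j"
    then show False using walk_short2[of E A q i j] q that L_def qmin by force
  qed
  have dq: "distinct q" unfolding distinct_conv_nth L_def[symmetric]
    by (metis M2 linorder_neq_iff)
  have L2: "L \<ge> 2"
  proof (rule ccontr)
    assume "\<not> L \<ge> 2"
    moreover have "L \<noteq> 0" using qne L_def by simp
    ultimately have "L = 1" by arith
    then show False using ha hb less.prems a_def b_def by auto
  qed
  have va: "E v a" and vb: "E v b" using less.prems a_def b_def by auto
  have av: "E a v" and bv: "E b v" using va vb sym by auto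
  have ab: "a \<noteq> b" using less.prems a_def b_def by auto
  have vV: "v \<in> V" using va EV by auto
  show ?case
  proof (cases "L = 2")
    case True
    then show ?thesis using edge[of 0] ha hb a_def b_def by auto
  next
    case False
    then have L3: "L \<ge> 3" using L2 by auto
    show ?thesis
    proof (cases "\<exists>i. 0 < i \<and> i < L - 1 \<and> E v (q!i)")
      case True
      then obtain i where i: "0 < i" "i < L - 1" "E v (q!i)" by auto
      have w1: "walk E A (take (Suc i) q)" "hd (take (Suc i) q) = a" "last (take (Suc i) q) = q!i"
        using walk_take[of E A q "Suc i"] q i L_def by auto
      have "a \<noteq> q!i" using M2[of 0 i] i ha by auto
      then have e1: "E a (q!i)"
        using less.hyps[of "take (Suc i) q"] w1 i L_def Lp less.prems va by auto
      have w2: "walk E A (drop i q)" "hd (drop i q) = q!i" "last (drop i q) = b"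
        using walk_drop[of E A q i] q i L_def by auto
      have "q!i \<noteq> b" using M2[of i "L-1"] i hb by auto
      then have e2: "E (q!i) b"
        using less.hyps[of "drop i q"] w2 i L_def Lp less.prems vb by auto
      obtain K1 where K1: "K1 \<in> KK" "v \<in> K1" "a \<in> K1" "q!i \<in> K1" using tri[OF va e1 i(3)] by blast
      obtain K2 where K2: "K2 \<in> KK" "v \<in> K2" "q!i \<in> K2" "b \<in> K2" using tri[OF i(3) e2 vb] by blast
      have "v \<noteq> q!i" using i irr by auto
      then have "K1 = K2" using same_K K1 K2 by blast
      then show ?thesis using clique_edge[of K1 a b] K1 K2 ab a_def b_def by auto
    next
      case False
      define c where "c = q @ [v]"
      have lc: "length c = Suc L" using c_def L_def by simp
      have cq: "c!i = q!i" if "i < L" for i using that c_def L_def by (simp add: nth_append)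
      have cv: "c!L = v" using c_def L_def by simp
      have modi: "Suc i mod Suc L = Suc i" if "i < L" for i using that by simp
      have modL: "Suc L mod Suc L = 0" by simp
      have "\<exists>K\<in>KK. set c \<subseteq> K"
      proof (rule cycle)
        show "distinct c" using dq qA less.prems c_def by auto
        show "length c \<ge> 3" using lc L3 by simp
        show "set c \<subseteq> V" using qA less.prems vV c_def by auto
        show "\<forall>i<length c. \<forall>j<length c. E (c!i) (c!j) \<longleftrightarrow> (j = Suc i mod length c \<or> i = Suc j mod length c)"
        proof (intro allI impI)
          fix i j assume i: "i < length c" and j: "j < length c"
          have qq: "E (q!i) (q!j) \<longleftrightarrow> (j = Suc i \<or> i = Suc j)" if "i < L" "j < L" for i j
          proof
            assume e: "E (q!i) (q!j)"
            show "j = Suc i \<or> i = Suc j"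
            proof (cases i j rule: linorder_cases)
              case less then show ?thesis using M1 e that by auto
            next
              case equal then show ?thesis using e irr by auto
            next
              case greater then show ?thesis using M1[of j i] e sym that by auto
            qed
          next
            assume "j = Suc i \<or> i = Suc j"
            then show "E (q!i) (q!j)" using edge that sym by auto
          qed
          have qv: "E (q!i) v \<longleftrightarrow> (i = 0 \<or> i = L - 1)" if "i < L" for i
          proof
            assume e: "E (q!i) v"
            show "i = 0 \<or> i = L - 1"
            proof (rule ccontr)
              assume "\<not> (i = 0 \<or> i = L - 1)"
              then have "0 < i" "i < L - 1" using that by auto
              then show False using False e sym by blast
            qed
          next
            assume "i = 0 \<or> i = L - 1"
            then show "E (q!i) v" using ha hb av bv by auto
          qed
          show "E (c!i) (c!j) \<longleftrightarrow> (j = Suc i mod length c \<or> i = Suc j mod length c)"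
          proof (cases "i < L")
            case iL: True
            show ?thesis
            proof (cases "j < L")
              case True
              then show ?thesis using iL qq cq modi lc by simp
            next
              case False
              then have "j = L" using j lc by auto
              then show ?thesis using iL qv cq cv modi lc L3 by auto
            qed
          next
            case False
            then have iL: "i = L" using i lc by auto
            show ?thesis
            proof (cases "j < L")
              case True
              have "E v (q!j) \<longleftrightarrow> E (q!j) v" using sym by blast
              then show ?thesis using True iL qv[OF True] cq cv modi lc L3 by auto
            next
              case False
              then have "j = L" using j lc by auto
              then show ?thesis using iL cv irr lc L3 by auto
            qed
          qed
        qed
      qed
      then obtain K where K: "K \<in> KK" "set c \<subseteq> K" by blast
      have "a \<in> K" "b \<in> K" using K ha hb c_def qne L_def L2
        by (auto simp: nth_mem)
      then show ?thesis using clique_edge[of K a b] K ab a_def b_def by auto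
    qed
  qed
qed

lemma nbr:
  assumes "connected_set E A" "A \<subseteq> V" "v \<notin> A" "a \<in> A" "b \<in> A" "E v a" "E v b" "a \<noteq> b"
  shows "E a b"
proof -
  have "(\<lambda>u v. u \<in> A \<and> v \<in> A \<and> E u v)\<^sup>*\<^sup>* a b" using assms unfolding connected_set_def by blast
  then obtain p where p: "walk E A p" "hd p = a" "last p = b" using rtranclp_walk[of A E a b] assms(5) by blast
  then show ?thesis using key[of v A p] assms by auto
qed

lemma leave:
  assumes "(\<lambda>u v. u \<in> V \<and> v \<in> V \<and> E u v)\<^sup>*\<^sup>* a u" "a \<in> A" "u \<notin> A"
  shows "\<exists>x\<in>A. \<exists>y. y \<in> V \<and> y \<notin> A \<and> E x y"
  using assms
proof (induction rule: rtranclp_induct)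
  case base then show ?case by auto
next
  case (step y z)
  then show ?case by (cases "y \<in> A") auto
qed

lemma extend:
  assumes "A \<subseteq> V" "connected_set E A" "graph_hom E A V f"
  shows "\<exists>g. graph_hom E V V g \<and> (\<forall>x\<in>A. g x = f x)"
  using assms
proof (induction "card (V - A)" arbitrary: A f rule: less_induct)
  case less
  show ?case
  proof (cases "A = V")
    case True
    then show ?thesis using less.prems by auto
  next
    case False
    then obtain u where u: "u \<in> V" "u \<notin> A" using less.prems by auto
    obtain a where a: "a \<in> A" using less.prems unfolding connected_set_def by auto
    have "(\<lambda>u v. u \<in> V \<and> v \<in> V \<and> E u v)\<^sup>*\<^sup>* a u"
      using conn a u less.prems unfolding connected_set_def by blast
    then obtain x0 v where x0: "x0 \<in> A" "v \<in> V" "v \<notin> A" "E x0 v" using leave a u by blast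
    define N where "N = {x\<in>A. E v x}"
    have x0N: "x0 \<in> N" using x0 sym N_def by auto
    have finN: "finite N" using finV less.prems N_def by (auto intro: finite_subset)
    have vN: "v \<notin> N" using x0 N_def by auto
    have cl: "clique E (insert v N)"
      unfolding clique_def
    proof (intro ballI impI)
      fix x y assume xy: "x \<in> insert v N" "y \<in> insert v N" "x \<noteq> y"
      show "E x y"
      proof (cases "x = v")
        case True then show ?thesis using xy N_def by auto
      next
        case xv: False
        show ?thesis
        proof (cases "y = v")
          case True then show ?thesis using xy xv N_def sym by auto
        next
          case False
          then show ?thesis using xy xv N_def nbr[of A v x y] less.prems x0 by auto
        qed
      qed
    qed
    obtain K where K: "K \<in> KK" "insert v N \<subseteq> K"
      using clique_in_K[OF cl] x0 less.prems N_def by auto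
    have "card (insert v N) \<le> n" using card_mono[OF finK[OF K(1)] K(2)] Ks K(1) by auto
    then have cN: "card N < n" using finN vN by auto
    have fe: "E (f x) (f y)" if "x \<in> A" "y \<in> A" "E x y" for x y
      using less.prems that unfolding graph_hom_def by auto
    have fV: "f x \<in> V" if "x \<in> A" for x using less.prems that unfolding graph_hom_def by auto
    have clN: "E x y" if "x \<in> N" "y \<in> N" "x \<noteq> y" for x y
      using cl that unfolding clique_def by auto
    have inj: "inj_on f N"
    proof (rule inj_onI)
      fix x y assume "x \<in> N" "y \<in> N" "f x = f y"
      then show "x = y" using clN fe irr N_def by (metis (mono_tags, lifting) mem_Collect_eq)
    qed
    define C where "C = f ` N"
    have cC: "card C < n" using card_image[OF inj] cN C_def by simp
    have clC: "clique E C" unfolding clique_def C_def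
      using clN fe N_def by auto
    obtain K' where K': "K' \<in> KK" "C \<subseteq> K'"
      using clique_in_K[OF clC] x0N fV N_def C_def by blast
    have "\<not> K' \<subseteq> C"
    proof
      assume "K' \<subseteq> C"
      then have "card K' \<le> card C" using card_mono finN C_def by blast
      then show False using cC Ks K' by auto
    qed
    then obtain w where w: "w \<in> K'" "w \<notin> C" by auto
    have wV: "w \<in> V" using w Ks K' by auto
    have Cw: "E c w" if "c \<in> C" for c using clique_edge[OF K'(1)] that K' w by auto
    define f' where "f' = f(v := w)"
    define A' where "A' = insert v A"
    have hom': "graph_hom E A' V f'"
      unfolding graph_hom_def
    proof (intro conjI ballI impI)
      fix x assume "x \<in> A'" then show "f' x \<in> V" using wV fV f'_def A'_def by auto
    next
      fix x y assume xy: "x \<in> A'" "y \<in> A'" "E x y"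
      show "E (f' x) (f' y)"
      proof (cases "x = v")
        case True
        then have "y \<noteq> v" using xy irr by auto
        then have "y \<in> N" using xy True A'_def N_def by auto
        then have "E (f y) w" using Cw C_def by auto
        then show ?thesis using True \<open>y \<noteq> v\<close> f'_def sym by auto
      next
        case xv: False
        show ?thesis
        proof (cases "y = v")
          case True
          then have "x \<in> N" using xy xv A'_def N_def sym by auto
          then have "E (f x) w" using Cw C_def by auto
          then show ?thesis using True xv f'_def by auto
        next
          case False
          then show ?thesis using xv xy fe f'_def A'_def by auto
        qed
      qed
    qed
    have RA: "(\<lambda>u v. u \<in> A' \<and> v \<in> A' \<and> E u v)\<^sup>*\<^sup>* x y" if "x \<in> A" "y \<in> A" for x y
    proof -
      have "(\<lambda>u v. u \<in> A \<and> v \<in> A \<and> E u v)\<^sup>*\<^sup>* x y" using less.prems that unfolding connected_set_def by blast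
      moreover have "\<And>a b. (\<lambda>u v. u \<in> A \<and> v \<in> A \<and> E u v) a b \<longrightarrow> (\<lambda>u v. u \<in> A' \<and> v \<in> A' \<and> E u v) a b"
        using A'_def by auto
      ultimately show ?thesis using mono_rtranclp[of "\<lambda>u v. u \<in> A \<and> v \<in> A \<and> E u v" "\<lambda>u v. u \<in> A' \<and> v \<in> A' \<and> E u v"]
        by blast
    qed
    have vx0: "(\<lambda>u v. u \<in> A' \<and> v \<in> A' \<and> E u v) v x0" using x0 sym A'_def by auto
    have x0v: "(\<lambda>u v. u \<in> A' \<and> v \<in> A' \<and> E u v) x0 v" using x0 A'_def by auto
    have conn': "connected_set E A'"
      unfolding connected_set_def
    proof (intro conjI ballI)
      show "A' \<noteq> {}" using A'_def by auto
    next
      fix x y assume xy: "x \<in> A'" "y \<in> A'"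
      show "(\<lambda>u v. u \<in> A' \<and> v \<in> A' \<and> E u v)\<^sup>*\<^sup>* x y"
      proof (cases "x = v")
        case True
        show ?thesis
        proof (cases "y = v")
          case True then show ?thesis using \<open>x = v\<close> by simp
        next
          case False
          then have "y \<in> A" using xy A'_def by auto
          then show ?thesis using True converse_rtranclp_into_rtranclp[OF vx0 RA[OF x0(1)]] by simp
        qed
      next
        case xv: False
        then have xA: "x \<in> A" using xy A'_def by auto
        show ?thesis
        proof (cases "y = v")
          case True then show ?thesis using rtranclp.rtrancl_into_rtrancl[OF RA[OF xA x0(1)] x0v] by simp
        next
          case False
          then show ?thesis using RA xA xy A'_def by auto
        qed
      qed
    qed
    have "card (V - A') < card (V - A)"
    proof -
      have "V - A' = (V - A) - {v}" using A'_def by auto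
      moreover have "v \<in> V - A" using x0 by auto
      moreover have "finite (V - A)" using finV by auto
      ultimately show ?thesis using card_Diff1_less[of "V - A" v] by simp
    qed
    moreover have "A' \<subseteq> V" using less.prems x0 A'_def by auto
    ultimately obtain g where g: "graph_hom E V V g" "\<forall>x\<in>A'. g x = f' x"
      using less.hyps conn' hom' by blast
    then show ?thesis using f'_def A'_def x0 by (intro exI[of _ g]) auto
  qed
qed

end

theorem lemma5p1:
  fixes n :: nat and V :: "'a set" and E :: "'a \<Rightarrow> 'a \<Rightarrow> bool"
  assumes "n \<ge> 2"
    and "Kn_treelike n V E"
  shows "C_HH V E"
proof -
  from assms(2) obtain KK where h: "simple_graph V E" "finite V" "connected_set E V" "\<Union>KK = V"
    "\<forall>K\<in>KK. K \<subseteq> V \<and> card K = n \<and> clique E K"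
    "\<forall>x y. E x y \<longrightarrow> (\<exists>K\<in>KK. x \<in> K \<and> y \<in> K)"
    "\<forall>K\<in>KK. \<forall>K'\<in>KK. K \<noteq> K' \<longrightarrow> card (K \<inter> K') \<le> 1"
    "\<forall>C. C \<subseteq> V \<and> induced_cycle E C \<longrightarrow> (\<exists>K\<in>KK. C \<subseteq> K)"
    unfolding Kn_treelike_def by auto
  interpret TL n V E KK
  proof
    show "n \<ge> 2" by (rule assms(1))
  qed (use h in \<open>auto simp: simple_graph_def\<close>)
  show ?thesis
    unfolding C_HH_def
  proof (intro allI impI)
    fix A f assume "A \<subseteq> V \<and> finite A \<and> connected_set E A \<and> graph_hom E A V f"
    then show "\<exists>g. graph_hom E V V g \<and> (\<forall>x\<in>A. g x = f x)" by (intro extend) auto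
  qed
qed

end
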